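(* Let $\mathcal F$ be a homogeneous foliation of degree $d$ on $\mathbb P^2$, i.e. defined in some affine coordinates $(x,y)$ by a vector field whose coefficients are homogeneous polynomials of degree $d$, and let $O=(0,0)$. If the curvature $K(\mathrm{Leg}\,\mathcal F)$ is holomorphic on $\check{\mathbb P}^2\setminus\check O$, then $K(\mathrm{Leg}\,\mathcal F)\equiv 0$.
   Context: $\check O\subset\check{\mathbb P}^2$ denotes the dual line of $O$, consisting of the lines through $O$. With affine coordinates $(p,q)$ on $\check{\mathbb P}^2$ corresponding to the line $\{y=px+q\}$, the Legendre transform $\mathrm{Leg}\,\mathcal F$ of the foliation given by $A\partial_x+B\partial_y$ is the $d$-web on $\check{\mathbb P}^2$ defined by the implicit differential equation $B(x,px+q)-pA(x,px+q)=0$ with $x=-\frac{dq}{dp}$. The curvature $K(\mathcal W)$ of a web $\mathcal W$: for a $3$-web given locally off its discriminant by $1$-forms $\omega_1,\omega_2,\omega_3$ normalized so that $\omega_1+\omega_2+\omega_3=0$, there is a unique $1$-form $\eta$ with $d\omega_i=\eta\wedge\omega_i$, and $K=d\eta$; for a $k$-web with $k>3$ it is the sum of the curvatures of all its $3$-subwebs. It is a meromorphic $2$-form with poles in the discriminant. *)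

theory Defs
  imports "HOL-Analysis.Analysis"
begin

definition hom_form :: "(nat \<Rightarrow> complex) \<Rightarrow> nat \<Rightarrow> complex \<Rightarrow> complex \<Rightarrow> complex" where
  "hom_form c d x y = (\<Sum>i\<le>d. c i * x ^ i * y ^ (d - i))"

text \<open>Homogeneous foliation of degree d given by A d/dx + B d/dy with A = hom_form a d,
  B = hom_form b d: A and B have no common factor (equivalently, for binary forms,
  no common zero besides the origin) and the vector field is not radial
  (x B - y A not identically zero), so that the foliation really has degree d.\<close>
definition homogeneous_foliation :: "(nat \<Rightarrow> complex) \<Rightarrow> (nat \<Rightarrow> complex) \<Rightarrow> nat \<Rightarrow> bool" where
  "homogeneous_foliation a b d \<longleftrightarrow>
     (\<forall>x y. hom_form a d x y = 0 \<and> hom_form b d x y = 0 \<longrightarrow> x = 0 \<and> y = 0) \<and>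
     (\<exists>x y. x * hom_form b d x y - y * hom_form a d x y \<noteq> 0)"

text \<open>Implicit equation of Leg F in the affine chart (p,q) of the dual plane
  (line y = p x + q): the leaves through (p,q) have dq/dp = -x where x is a root of
  B(x, p x + q) - p A(x, p x + q).\<close>
definition leg_poly :: "(nat \<Rightarrow> complex) \<Rightarrow> (nat \<Rightarrow> complex) \<Rightarrow> nat \<Rightarrow> complex \<Rightarrow> complex \<Rightarrow> complex \<Rightarrow> complex" where
  "leg_poly a b d p q x = hom_form b d x (p * x + q) - p * hom_form a d x (p * x + q)"

definition dP :: "(complex \<times> complex \<Rightarrow> complex) \<Rightarrow> complex \<times> complex \<Rightarrow> complex" where
  "dP g z = deriv (\<lambda>t. g (t, snd z)) (fst z)"

definition dQ :: "(complex \<times> complex \<Rightarrow> complex) \<Rightarrow> complex \<times> complex \<Rightarrow> complex" where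
  "dQ g z = deriv (\<lambda>t. g (fst z, t)) (snd z)"

text \<open>Curvature (coefficient of dp wedge dq) of the 3-web given by the 1-forms
  w_i = dq + x_i dp.  Normalization: l_1 = x_2 - x_3, l_2 = x_3 - x_1, l_3 = x_1 - x_2,
  so that sum l_i w_i = 0.  Writing eta = e dp + f dq, the condition
  d(l_i w_i) = eta wedge (l_i w_i) reads e - x_i f = c_i with
  c_i = (dP l_i - dQ (l_i x_i)) / l_i; K = d eta = (dP f - dQ e) dp wedge dq.\<close>
definition web3_curv ::
  "(complex \<times> complex \<Rightarrow> complex) \<Rightarrow> (complex \<times> complex \<Rightarrow> complex) \<Rightarrow>
   (complex \<times> complex \<Rightarrow> complex) \<Rightarrow> complex \<times> complex \<Rightarrow> complex" where
  "web3_curv x1 x2 x3 z =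
     (let l1 = (\<lambda>w. x2 w - x3 w);
          l2 = (\<lambda>w. x3 w - x1 w);
          c1 = (\<lambda>w. (dP l1 w - dQ (\<lambda>v. l1 v * x1 v) w) / l1 w);
          c2 = (\<lambda>w. (dP l2 w - dQ (\<lambda>v. l2 v * x2 v) w) / l2 w);
          f = (\<lambda>w. (c1 w - c2 w) / (x2 w - x1 w));
          e = (\<lambda>w. c1 w + x1 w * f w)
      in dP f z - dQ e z)"

definition web_curv :: "nat \<Rightarrow> (nat \<Rightarrow> complex \<times> complex \<Rightarrow> complex) \<Rightarrow> complex \<times> complex \<Rightarrow> complex" where
  "web_curv d X z = (\<Sum>(i,j,k)\<in>{(i,j,k). i < j \<and> j < k \<and> k < d}. web3_curv (X i) (X j) (X k) z)"

definition sep_holo_on :: "(complex \<times> complex) set \<Rightarrow> (complex \<times> complex \<Rightarrow> complex) \<Rightarrow> bool" where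
  "sep_holo_on U g \<longleftrightarrow> (\<forall>z\<in>U. (\<lambda>t. g (t, snd z)) field_differentiable at (fst z) \<and>
                               (\<lambda>t. g (fst z, t)) field_differentiable at (snd z))"

text \<open>Local description of Leg F off its discriminant on an open set U of the (p,q)-chart:
  d pairwise distinct holomorphic root branches X 0, ..., X (d-1).\<close>
definition leg_branches ::
  "(nat \<Rightarrow> complex) \<Rightarrow> (nat \<Rightarrow> complex) \<Rightarrow> nat \<Rightarrow> (complex \<times> complex) set \<Rightarrow>
   (nat \<Rightarrow> complex \<times> complex \<Rightarrow> complex) \<Rightarrow> bool" where
  "leg_branches a b d U X \<longleftrightarrow> open U \<and>
     (\<forall>i<d. continuous_on U (X i) \<and> sep_holo_on U (X i)) \<and>
     (\<forall>z\<in>U. \<forall>i<d. leg_poly a b d (fst z) (snd z) (X i z) = 0) \<and>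
     (\<forall>z\<in>U. \<forall>i<d. \<forall>j<d. i \<noteq> j \<longrightarrow> X i z \<noteq> X j z)"

text \<open>K(Leg F) = k dp wedge dq at the point z of the (p,q)-chart (z off the discriminant).\<close>
definition leg_curv_at :: "(nat \<Rightarrow> complex) \<Rightarrow> (nat \<Rightarrow> complex) \<Rightarrow> nat \<Rightarrow> complex \<times> complex \<Rightarrow> complex \<Rightarrow> bool" where
  "leg_curv_at a b d z k \<longleftrightarrow> (\<exists>U X. z \<in> U \<and> leg_branches a b d U X \<and> k = web_curv d X z)"

text \<open>The dual plane minus the dual line of O is the affine chart (u,v) of lines
  u x + v y + 1 = 0; on v \<noteq> 0 this is the line y = p x + q with p = -u/v, q = -1/v,
  and dp wedge dq = -(1/v^3) du wedge dv.  K(Leg F) is holomorphic there iff its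
  coefficient in (u,v) extends to a holomorphic function on all of C^2.\<close>
definition leg_curv_holo_off_dualO :: "(nat \<Rightarrow> complex) \<Rightarrow> (nat \<Rightarrow> complex) \<Rightarrow> nat \<Rightarrow> bool" where
  "leg_curv_holo_off_dualO a b d \<longleftrightarrow>
     (\<exists>g. continuous_on UNIV g \<and> sep_holo_on UNIV g \<and>
        (\<forall>u v k. v \<noteq> 0 \<longrightarrow> leg_curv_at a b d (- u / v, - 1 / v) k \<longrightarrow> g (u, v) = - k / v ^ 3))"

end

theory Submission
  imports Defs "HOL-Computational_Algebra.Fundamental_Theorem_Algebra" "HOL-Complex_Analysis.Cauchy_Integral_Formula"
begin

lemma hom_form_scale: "hom_form c d (s*x) (s*y) = s^d * hom_form c d x y"
  unfolding hom_form_def sum_distrib_left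
proof (rule sum.cong[OF refl])
  fix i assume "i \<in> {..d}"
  then have "s^d = s^i * s^(d-i)" by (simp add: power_add[symmetric])
  then show "c i * (s * x) ^ i * (s * y) ^ (d - i) = s ^ d * (c i * x ^ i * y ^ (d - i))"
    by (simp add: power_mult_distrib)
qed

lemma leg_poly_scale: "leg_poly a b d p (s*q) (s*x) = s^d * leg_poly a b d p q x"
proof -
  have "p * (s*x) + s*q = s * (p*x+q)" by (simp add: algebra_simps)
  then show ?thesis unfolding leg_poly_def by (simp only: hom_form_scale) (simp add: algebra_simps)
qed

definition Lp where "Lp a b d p = hom_form b d 1 p - p * hom_form a d 1 p"

lemma leg_poly_zero_q: "leg_poly a b d p 0 x = x^d * Lp a b d p"
proof -
  have "leg_poly a b d p (x*0) (x*1) = x^d * leg_poly a b d p 0 1" by (rule leg_poly_scale)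
  then show ?thesis unfolding Lp_def leg_poly_def by simp
qed

lemma coeff_lin_power: "coeff ([:1, p:] ^ n) n = p ^ n \<and> degree ([:1,p:]^n) \<le> n"
proof (induction n)
  case 0 then show ?case by simp
next
  case (Suc n)
  have e: "[:1,p:] ^ Suc n = [:1,p:]^n + pCons 0 (smult p ([:1,p:]^n))"
    by (simp add: mult_pCons_left)
  have "coeff ([:1,p:]^n) (Suc n) = 0" using Suc.IH by (simp add: coeff_eq_0)
  then have c: "coeff ([:1, p:] ^ Suc n) (Suc n) = p ^ Suc n" using Suc.IH unfolding e by simp
  have "degree ([:1,p:] ^ Suc n) \<le> Suc n"
    by (rule order_trans[OF degree_power_le]) simp
  with c show ?case by simp
qed

definition HP :: "(nat \<Rightarrow> complex) \<Rightarrow> nat \<Rightarrow> complex \<Rightarrow> complex poly" where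
  "HP c d p = (\<Sum>i\<le>d. smult (c i) (monom 1 i * [:1,p:]^(d-i)))"

lemma poly_HP: "poly (HP c d p) x = hom_form c d x (p*x+1)"
  unfolding HP_def hom_form_def by (simp add: poly_sum poly_monom algebra_simps)

lemma degree_HP: "degree (HP c d p) \<le> d"
  unfolding HP_def
proof (rule degree_sum_le[OF finite_atMost])
  fix i assume i: "i \<in> {..d}"
  have "degree (monom (1::complex) i * [:1,p:]^(d-i)) \<le> degree (monom (1::complex) i) + degree ([:1,p:]^(d-i))"
    by (rule degree_mult_le)
  also have "\<dots> \<le> i + (d - i)" using coeff_lin_power[of p "d-i"] by (simp add: degree_monom_eq)
  also have "i + (d - i) = d" using i by simp
  finally show "degree (smult (c i) (monom 1 i * [:1, p:] ^ (d - i))) \<le> d"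
    by (rule order_trans[OF degree_smult_le])
qed

lemma coeff_HP: "coeff (HP c d p) d = hom_form c d 1 p"
  unfolding HP_def hom_form_def coeff_sum
  by (intro sum.cong refl) (simp add: coeff_monom_mult coeff_lin_power)

definition QP where "QP a b d p = HP b d p - smult p (HP a d p)"

lemma poly_QP: "poly (QP a b d p) x = leg_poly a b d p 1 x"
  unfolding QP_def leg_poly_def by (simp add: poly_HP)

lemma degree_QP: "degree (QP a b d p) \<le> d"
  unfolding QP_def using degree_HP
  by (intro degree_diff_le order_trans[OF degree_smult_le]) auto

lemma coeff_QP: "coeff (QP a b d p) d = Lp a b d p"
  unfolding QP_def Lp_def by (simp add: coeff_HP)

lemma QP_nonzero:
  assumes hf: "homogeneous_foliation a b d" and d1: "d \<ge> 1"
  shows "QP a b d p \<noteq> 0"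
proof
  assume Q0: "QP a b d p = 0"
  have L0: "Lp a b d p = 0" using coeff_QP[of a b d p] Q0 by simp
  have lp1: "leg_poly a b d p 1 x = 0" for x using poly_QP[of a b d p x] Q0 by simp
  have BA: "hom_form b d X Y = p * hom_form a d X Y" for X Y
  proof (cases "Y = p*X")
    case True
    have "leg_poly a b d p 0 X = 0" using leg_poly_zero_q[of a b d p X] L0 by simp
    then show ?thesis using True unfolding leg_poly_def by simp
  next
    case False
    define s where "s = Y - p*X"
    have s0: "s \<noteq> 0" using False s_def by simp
    have "leg_poly a b d p (s*1) (s*(X/s)) = 0" using leg_poly_scale[of a b d p s 1 "X/s"] lp1 by simp
    then have "leg_poly a b d p s X = 0" using s0 by simp
    moreover have "p*X + s = Y" using s_def by simp
    ultimately show ?thesis unfolding leg_poly_def by simp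
  qed
  obtain X Y where XY: "hom_form a d X Y = 0" "(X,Y) \<noteq> (0,0)"
  proof (cases "a d = 0")
    case True
    have "hom_form a d 1 0 = (\<Sum>i\<le>d. if i = d then a d else 0)"
      unfolding hom_form_def by (intro sum.cong refl) auto
    then have "hom_form a d 1 0 = 0" using True by simp
    then show ?thesis by (rule that) simp
  next
    case False
    define P where "P = (\<Sum>i\<le>d. monom (a i) i)"
    have pP: "poly P t = hom_form a d t 1" for t
      unfolding P_def hom_form_def by (simp add: poly_sum poly_monom mult.commute)
    have "coeff P d = (\<Sum>i\<le>d. if i = d then a i else 0)"
      unfolding P_def coeff_sum by (intro sum.cong refl) (auto simp: coeff_monom)
    then have "coeff P d = a d" by simp
    then have "degree P \<ge> d" using False by (simp add: le_degree)
    then have "\<not> constant (poly P)" using d1 constant_degree[of P] by simp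
    then obtain t where "poly P t = 0" using Fundamental_Theorem_Algebra.fundamental_theorem_of_algebra[of P] by blast
    then have "hom_form a d t 1 = 0" using pP by simp
    then show ?thesis by (rule that) simp
  qed
  moreover have "hom_form b d X Y = 0" using BA[of X Y] XY(1) by simp
  moreover have "\<forall>x y. hom_form a d x y = 0 \<and> hom_form b d x y = 0 \<longrightarrow> x = 0 \<and> y = 0"
    using hf unfolding homogeneous_foliation_def by blast
  ultimately have "X = 0 \<and> Y = 0" using XY(1) by blast
  then show False using XY(2) by simp
qed

lemma roots_finite:
  assumes "homogeneous_foliation a b d" "d \<ge> 1"
  shows "finite {x. leg_poly a b d p 1 x = 0}"
  using poly_roots_finite[OF QP_nonzero[OF assms, of p]] by (simp add: poly_QP)

lemma ev_fst:
  assumes "open N" "w \<in> N" shows "eventually (\<lambda>t. (t, snd w) \<in> N) (nhds (fst w))"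
proof -
  have "((\<lambda>t. (t, snd w)) \<longlongrightarrow> (fst w, snd w)) (nhds (fst w))"
    by (intro tendsto_Pair filterlim_ident tendsto_const)
  then show ?thesis using assms unfolding tendsto_def by auto
qed

lemma ev_snd:
  assumes "open N" "w \<in> N" shows "eventually (\<lambda>t. (fst w, t) \<in> N) (nhds (snd w))"
proof -
  have "((\<lambda>t. (fst w, t)) \<longlongrightarrow> (fst w, snd w)) (nhds (snd w))"
    by (intro tendsto_Pair filterlim_ident tendsto_const)
  then show ?thesis using assms unfolding tendsto_def by auto
qed

lemma dP_local:
  assumes "open N" "w \<in> N" "\<forall>v\<in>N. g v = G (fst v) (snd v)"
    "((\<lambda>t. G t (snd w)) has_field_derivative D) (at (fst w))"
  shows "dP g w = D"
proof -
  have "eventually (\<lambda>t. g (t, snd w) = G t (snd w)) (nhds (fst w))"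
    using ev_fst[OF assms(1,2)] assms(3) by (auto elim: eventually_mono)
  then have "dP g w = deriv (\<lambda>t. G t (snd w)) (fst w)" unfolding dP_def
    by (rule deriv_cong_ev) simp
  then show ?thesis using DERIV_imp_deriv[OF assms(4)] by simp
qed

lemma dQ_local:
  assumes "open N" "w \<in> N" "\<forall>v\<in>N. g v = G (fst v) (snd v)"
    "((\<lambda>t. G (fst w) t) has_field_derivative D) (at (snd w))"
  shows "dQ g w = D"
proof -
  have "eventually (\<lambda>t. g (fst w, t) = G (fst w) t) (nhds (snd w))"
    using ev_snd[OF assms(1,2)] assms(3) by (auto elim: eventually_mono)
  then have "dQ g w = deriv (\<lambda>t. G (fst w) t) (snd w)" unfolding dQ_def
    by (rule deriv_cong_ev) simp
  then show ?thesis using DERIV_imp_deriv[OF assms(4)] by simp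
qed

definition cc :: "(complex\<times>complex \<Rightarrow> complex) \<Rightarrow> (complex\<times>complex \<Rightarrow> complex) \<Rightarrow> complex\<times>complex \<Rightarrow> complex" where
  "cc l x w = (dP l w - dQ (\<lambda>v. l v * x v) w) / l w"

definition ff where
  "ff x1 x2 x3 w = (cc (\<lambda>w. x2 w - x3 w) x1 w - cc (\<lambda>w. x3 w - x1 w) x2 w) / (x2 w - x1 w)"

definition ee where
  "ee x1 x2 x3 w = cc (\<lambda>w. x2 w - x3 w) x1 w + x1 w * ff x1 x2 x3 w"

lemma web3_alt: "web3_curv x1 x2 x3 z = dP (ff x1 x2 x3) z - dQ (ee x1 x2 x3) z"
  unfolding web3_curv_def Let_def ff_def[abs_def] ee_def[abs_def] cc_def[abs_def] by simp

definition C3 :: "(complex \<Rightarrow> complex) \<Rightarrow> (complex \<Rightarrow> complex) \<Rightarrow> (complex \<Rightarrow> complex) \<Rightarrow> complex \<Rightarrow> complex" where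
  "C3 r1 r2 r3 t = (deriv r2 t - deriv r3 t) / (r2 t - r3 t) - 2 * r1 t"

definition F3 :: "(complex \<Rightarrow> complex) \<Rightarrow> (complex \<Rightarrow> complex) \<Rightarrow> (complex \<Rightarrow> complex) \<Rightarrow> complex \<Rightarrow> complex" where
  "F3 r1 r2 r3 t = (C3 r1 r2 r3 t - C3 r2 r3 r1 t) / (r2 t - r1 t)"

lemma C3_holo:
  assumes "open B" "ra holomorphic_on B" "rb holomorphic_on B" "rc holomorphic_on B"
    "\<forall>t\<in>B. rb t \<noteq> rc t"
  shows "C3 ra rb rc holomorphic_on B"
proof -
  have "deriv rb holomorphic_on B" "deriv rc holomorphic_on B"
    using assms holomorphic_deriv by auto
  then have "(\<lambda>t. (deriv rb t - deriv rc t) / (rb t - rc t) - 2 * ra t) holomorphic_on B"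
    using assms by (intro holomorphic_intros) auto
  then show ?thesis unfolding C3_def[abs_def] .
qed

lemma F3_holo:
  assumes "open B" "r1 holomorphic_on B" "r2 holomorphic_on B" "r3 holomorphic_on B"
    "\<forall>t\<in>B. r1 t \<noteq> r2 t \<and> r2 t \<noteq> r3 t \<and> r1 t \<noteq> r3 t"
  shows "F3 r1 r2 r3 holomorphic_on B"
proof -
  have "C3 r1 r2 r3 holomorphic_on B" "C3 r2 r3 r1 holomorphic_on B"
    using assms by (auto intro!: C3_holo)
  then have "(\<lambda>t. (C3 r1 r2 r3 t - C3 r2 r3 r1 t) / (r2 t - r1 t)) holomorphic_on B"
    using assms by (intro holomorphic_intros) auto
  then show ?thesis unfolding F3_def[abs_def] .
qed

lemma cc_local:
  assumes B: "open B" and N: "open N" and NB: "\<forall>w\<in>N. fst w \<in> B \<and> snd w \<noteq> 0"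
    and h: "ra holomorphic_on B" "rb holomorphic_on B" "rc holomorphic_on B"
    and ne: "\<forall>t\<in>B. rb t \<noteq> rc t"
    and xa: "\<forall>w\<in>N. xa w = snd w * ra (fst w)"
    and xb: "\<forall>w\<in>N. xb w = snd w * rb (fst w)"
    and xc: "\<forall>w\<in>N. xc w = snd w * rc (fst w)"
    and w: "w \<in> N"
  shows "cc (\<lambda>w. xb w - xc w) xa w = C3 ra rb rc (fst w)"
proof -
  define t where "t = fst w"
  define q where "q = snd w"
  have tB: "t \<in> B" and q0: "q \<noteq> 0" using NB w t_def q_def by auto
  have db: "(rb has_field_derivative deriv rb t) (at t)"
    by (rule DERIV_deriv_iff_field_differentiable[THEN iffD2, OF holomorphic_on_imp_differentiable_at[OF h(2) B tB]])
  have dc: "(rc has_field_derivative deriv rc t) (at t)"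
    by (rule DERIV_deriv_iff_field_differentiable[THEN iffD2, OF holomorphic_on_imp_differentiable_at[OF h(3) B tB]])
  have e1: "dP (\<lambda>w. xb w - xc w) w = q * (deriv rb t - deriv rc t)"
  proof (rule dP_local[where G = "\<lambda>t s. s * (rb t - rc t)", OF N w])
    show "\<forall>v\<in>N. xb v - xc v = snd v * (rb (fst v) - rc (fst v))" using xb xc by (simp add: algebra_simps)
    show "((\<lambda>t. snd w * (rb t - rc t)) has_field_derivative q * (deriv rb t - deriv rc t)) (at (fst w))"
      using DERIV_cmult[OF DERIV_diff[OF db dc], of q] unfolding q_def t_def by simp
  qed
  have e2: "dQ (\<lambda>v. (xb v - xc v) * xa v) w = 2 * q * ((rb t - rc t) * ra t)"
  proof (rule dQ_local[where G = "\<lambda>t s. s^2 * ((rb t - rc t) * ra t)", OF N w])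
    show "\<forall>v\<in>N. (xb v - xc v) * xa v = (snd v)^2 * ((rb (fst v) - rc (fst v)) * ra (fst v))"
      using xa xb xc by (simp add: algebra_simps power2_eq_square)
    show "((\<lambda>s. s^2 * ((rb (fst w) - rc (fst w)) * ra (fst w))) has_field_derivative 2 * q * ((rb t - rc t) * ra t)) (at (snd w))"
      unfolding q_def t_def by (intro derivative_eq_intros) auto
  qed
  have l: "xb w - xc w = q * (rb t - rc t)" using xb xc w t_def q_def by (simp add: algebra_simps)
  have n0: "rb t - rc t \<noteq> 0" using ne tB by simp
  show ?thesis unfolding cc_def e1 e2 l C3_def t_def[symmetric]
    using q0 n0 by (simp add: field_simps)
qed

lemma web3_formula:
  assumes B: "open B" and N: "open N" and NB: "\<forall>w\<in>N. fst w \<in> B \<and> snd w \<noteq> 0"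
    and h: "r1 holomorphic_on B" "r2 holomorphic_on B" "r3 holomorphic_on B"
    and ne: "\<forall>t\<in>B. r1 t \<noteq> r2 t \<and> r2 t \<noteq> r3 t \<and> r1 t \<noteq> r3 t"
    and x1: "\<forall>w\<in>N. x1 w = snd w * r1 (fst w)"
    and x2: "\<forall>w\<in>N. x2 w = snd w * r2 (fst w)"
    and x3: "\<forall>w\<in>N. x3 w = snd w * r3 (fst w)"
    and z: "z \<in> N"
  shows "web3_curv x1 x2 x3 z = deriv (F3 r1 r2 r3) (fst z) / snd z"
proof -
  have c1: "cc (\<lambda>w. x2 w - x3 w) x1 v = C3 r1 r2 r3 (fst v)" if "v \<in> N" for v
    using cc_local[OF B N NB h(1,2,3) _ x1 x2 x3 that] ne by auto
  have c2: "cc (\<lambda>w. x3 w - x1 w) x2 v = C3 r2 r3 r1 (fst v)" if "v \<in> N" for v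
  proof -
    have "\<forall>t\<in>B. r3 t \<noteq> r1 t" using ne by (auto simp: eq_commute[of "r3 _"])
    then show ?thesis using cc_local[OF B N NB h(2,3,1) _ x2 x3 x1 that] by blast
  qed
  have fv: "\<forall>v\<in>N. ff x1 x2 x3 v = F3 r1 r2 r3 (fst v) / snd v"
  proof
    fix v assume v: "v \<in> N"
    have "x2 v - x1 v = snd v * (r2 (fst v) - r1 (fst v))" using x1 x2 v by (simp add: algebra_simps)
    then show "ff x1 x2 x3 v = F3 r1 r2 r3 (fst v) / snd v"
      unfolding ff_def F3_def c1[OF v] c2[OF v] by simp
  qed
  have ev: "\<forall>v\<in>N. ee x1 x2 x3 v = C3 r1 r2 r3 (fst v) + r1 (fst v) * F3 r1 r2 r3 (fst v)"
  proof
    fix v assume v: "v \<in> N"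
    have "snd v \<noteq> 0" using NB v by auto
    then show "ee x1 x2 x3 v = C3 r1 r2 r3 (fst v) + r1 (fst v) * F3 r1 r2 r3 (fst v)"
      unfolding ee_def c1[OF v] fv[rule_format, OF v] x1[rule_format, OF v] by simp
  qed
  have zB: "fst z \<in> B" and q0: "snd z \<noteq> 0" using NB z by auto
  have "F3 r1 r2 r3 holomorphic_on B" using F3_holo[OF B h ne] .
  then have dF: "(F3 r1 r2 r3 has_field_derivative deriv (F3 r1 r2 r3) (fst z)) (at (fst z))"
    by (rule DERIV_deriv_iff_field_differentiable[THEN iffD2, OF holomorphic_on_imp_differentiable_at[OF _ B zB]])
  have "dP (ff x1 x2 x3) z = deriv (F3 r1 r2 r3) (fst z) / snd z"
  proof (rule dP_local[where G = "\<lambda>t s. F3 r1 r2 r3 t / s", OF N z fv])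
    show "((\<lambda>t. F3 r1 r2 r3 t / snd z) has_field_derivative deriv (F3 r1 r2 r3) (fst z) / snd z) (at (fst z))"
      using DERIV_cdivide[OF dF, of "snd z"] by simp
  qed
  moreover have "dQ (ee x1 x2 x3) z = 0"
    by (rule dQ_local[where G = "\<lambda>t s. C3 r1 r2 r3 t + r1 t * F3 r1 r2 r3 t", OF N z ev]) simp
  ultimately show ?thesis unfolding web3_alt by simp
qed

definition kap :: "nat \<Rightarrow> (nat \<Rightarrow> complex \<Rightarrow> complex) \<Rightarrow> complex \<Rightarrow> complex" where
  "kap d \<rho> p = (\<Sum>(i,j,k)\<in>{(i,j,k). i < j \<and> j < k \<and> k < d}. deriv (F3 (\<rho> i) (\<rho> j) (\<rho> k)) p)"

lemma web_formula:
  assumes B: "open B" and N: "open N" and NB: "\<forall>w\<in>N. fst w \<in> B \<and> snd w \<noteq> 0"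
    and h: "\<forall>i<d. \<rho> i holomorphic_on B"
    and ne: "\<forall>t\<in>B. \<forall>i<d. \<forall>j<d. i \<noteq> j \<longrightarrow> \<rho> i t \<noteq> \<rho> j t"
    and X: "\<forall>w\<in>N. \<forall>i<d. X i w = snd w * \<rho> i (fst w)"
    and z: "z \<in> N"
  shows "web_curv d X z = kap d \<rho> (fst z) / snd z"
  unfolding web_curv_def kap_def sum_divide_distrib
proof (rule sum.cong[OF refl])
  fix x assume "x \<in> {(i,j,k). i < j \<and> j < k \<and> k < d}"
  then obtain i j k where x: "x = (i,j,k)" and ijk: "i < j" "j < k" "k < d" by auto
  have "web3_curv (X i) (X j) (X k) z = deriv (F3 (\<rho> i) (\<rho> j) (\<rho> k)) (fst z) / snd z"
  proof (rule web3_formula[OF B N NB _ _ _ _ _ _ _ z])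
    show "\<rho> i holomorphic_on B" "\<rho> j holomorphic_on B" "\<rho> k holomorphic_on B" using h ijk by auto
    show "\<forall>t\<in>B. \<rho> i t \<noteq> \<rho> j t \<and> \<rho> j t \<noteq> \<rho> k t \<and> \<rho> i t \<noteq> \<rho> k t" using ne ijk by auto
    show "\<forall>w\<in>N. X i w = snd w * \<rho> i (fst w)" "\<forall>w\<in>N. X j w = snd w * \<rho> j (fst w)"
      "\<forall>w\<in>N. X k w = snd w * \<rho> k (fst w)" using X ijk by auto
  qed
  then show "(case x of (i, j, k) \<Rightarrow> web3_curv (X i) (X j) (X k) z) =
    (case x of (i, j, k) \<Rightarrow> deriv (F3 (\<rho> i) (\<rho> j) (\<rho> k)) (fst z)) / snd z" using x by simp
qed

lemma root_div:
  assumes "leg_poly a b d p t x = 0" "t \<noteq> 0"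
  shows "leg_poly a b d p 1 (x / t) = 0"
proof -
  have "leg_poly a b d p (t*1) (t*(x/t)) = t^d * leg_poly a b d p 1 (x/t)" by (rule leg_poly_scale)
  then show ?thesis using assms by simp
qed

lemma root_mul:
  assumes "leg_poly a b d p 1 x = 0"
  shows "leg_poly a b d p t (t * x) = 0"
  using leg_poly_scale[of a b d p t 1 x] assms by simp

lemma case_q0:
  assumes hf: "homogeneous_foliation a b d" and d3: "d \<ge> 3"
    and lb: "leg_branches a b d U X" and zU: "(p, 0) \<in> U"
  shows False
proof -
  have opU: "open U" and roots: "\<forall>z\<in>U. \<forall>i<d. leg_poly a b d (fst z) (snd z) (X i z) = 0"
    and dist: "\<forall>z\<in>U. \<forall>i<d. \<forall>j<d. i \<noteq> j \<longrightarrow> X i z \<noteq> X j z"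
    using lb unfolding leg_branches_def by auto
  have L0: "Lp a b d p = 0"
  proof (rule ccontr)
    assume L: "Lp a b d p \<noteq> 0"
    have "X i (p,0) = 0" if "i < d" for i
    proof -
      have "leg_poly a b d p 0 (X i (p,0)) = 0" using roots zU that by force
      then have "X i (p,0) ^ d = 0" using leg_poly_zero_q[of a b d p "X i (p,0)"] L by simp
      then show ?thesis by simp
    qed
    moreover have "X 0 (p,0) \<noteq> X 1 (p,0)" using dist zU d3 by force
    ultimately show False using d3 by simp
  qed
  have Q: "QP a b d p \<noteq> 0" using QP_nonzero[OF hf] d3 by simp
  have "degree (QP a b d p) \<noteq> d"
  proof
    assume "degree (QP a b d p) = d"
    then have "lead_coeff (QP a b d p) = 0" using coeff_QP[of a b d p] L0 by simp
    then show False using Q by simp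
  qed
  then have deg: "degree (QP a b d p) < d" using degree_QP[of a b d p] by simp
  obtain r where r: "r > 0" "ball (p,0) r \<subseteq> U" using opU zU open_contains_ball by blast
  define q' :: complex where "q' = of_real (r/2)"
  have q'0: "q' \<noteq> 0" using r unfolding q'_def of_real_eq_0_iff by simp
  have "dist (p,0) (p,q') < r" using r unfolding q'_def dist_Pair_Pair by (simp add: dist_norm)
  then have pq: "(p,q') \<in> U" using r by auto
  define S where "S = {x. poly (QP a b d p) x = 0}"
  have fS: "finite S" unfolding S_def using poly_roots_finite[OF Q] .
  have "(\<lambda>i. X i (p,q') / q') ` {..<d} \<subseteq> S"
    using roots pq q'0 unfolding S_def by (auto simp: poly_QP intro!: root_div)
  moreover have "inj_on (\<lambda>i. X i (p,q') / q') {..<d}"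
    using dist pq q'0 unfolding inj_on_def by auto
  ultimately have "card {..<d} \<le> card S" using card_inj_on_le fS by blast
  moreover have "card S \<le> degree (QP a b d p)" unfolding S_def by (rule card_poly_roots_bound[OF Q])
  ultimately show False using deg by simp
qed

lemma case_qne:
  assumes hf: "homogeneous_foliation a b d" and d1: "d \<ge> 1"
    and lb: "leg_branches a b d U X" and zU: "(p, q) \<in> U" and q0: "q \<noteq> 0"
  shows "\<exists>\<kappa>. web_curv d X (p,q) = \<kappa> / q \<and> (\<forall>q2. q2 \<noteq> 0 \<longrightarrow> leg_curv_at a b d (p,q2) (\<kappa>/q2))"
proof -
  have opU: "open U" and cont: "\<forall>i<d. continuous_on U (X i)" and sh: "\<forall>i<d. sep_holo_on U (X i)"
    and roots: "\<forall>z\<in>U. \<forall>i<d. leg_poly a b d (fst z) (snd z) (X i z) = 0"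
    and dist: "\<forall>z\<in>U. \<forall>i<d. \<forall>j<d. i \<noteq> j \<longrightarrow> X i z \<noteq> X j z"
    using lb unfolding leg_branches_def by auto
  obtain r where r: "r > 0" "ball (p,q) r \<subseteq> U" using opU zU open_contains_ball by blast
  define e where "e = min (r/2) (norm q)"
  have e0: "e > 0" using r q0 e_def by simp
  define B where "B = ball p e"
  define Qb where "Qb = ball q e"
  define N where "N = B \<times> Qb"
  have opB: "open B" and opN: "open N" unfolding B_def N_def Qb_def by (auto intro: open_Times)
  have NU: "N \<subseteq> U"
  proof
    fix w assume "w \<in> N"
    then obtain p' q' where w: "w = (p',q')" "dist p p' < e" "dist q q' < e"
      unfolding N_def B_def Qb_def by auto
    have "dist (p,q) (p',q') < r" unfolding dist_Pair_Pair
      using w e_def by (intro sqrt_sum_squares_half_less) auto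
    then show "w \<in> U" using r w by auto
  qed
  have Qb0: "t \<noteq> 0" if "t \<in> Qb" for t
  proof
    assume "t = 0"
    then show False using that e_def unfolding Qb_def by (simp add: dist_norm)
  qed
  have pB: "p \<in> B" and qQ: "q \<in> Qb" using e0 unfolding B_def Qb_def by auto
  define \<rho> where "\<rho> i t = X i (t, q) / q" for i t
  have struct: "\<forall>w\<in>N. \<forall>i<d. X i w = snd w * \<rho> i (fst w)"
  proof (intro ballI allI impI)
    fix w i assume wN: "w \<in> N" and i: "i < d"
    obtain p' q' where w: "w = (p',q')" "p' \<in> B" "q' \<in> Qb" using wN unfolding N_def by auto
    define h where "h t = X i (p', t) / t" for t
    have "continuous_on Qb (\<lambda>t. X i (p', t))"
    proof (rule continuous_on_compose2[of U "X i"])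
      show "continuous_on U (X i)" using cont i by simp
      show "continuous_on Qb (\<lambda>t. (p', t))" by (intro continuous_intros)
      show "(\<lambda>t. (p', t)) ` Qb \<subseteq> U" using NU w unfolding N_def by auto
    qed
    then have ch: "continuous_on Qb h" unfolding h_def using Qb0 by (intro continuous_intros) auto
    have "h ` Qb \<subseteq> {x. leg_poly a b d p' 1 x = 0}"
    proof
      fix y assume "y \<in> h ` Qb"
      then obtain t where t: "t \<in> Qb" "y = h t" by auto
      have "(p',t) \<in> U" using NU w t unfolding N_def by auto
      then have "leg_poly a b d p' t (X i (p',t)) = 0" using roots i by force
      then show "y \<in> {x. leg_poly a b d p' 1 x = 0}" using t Qb0 unfolding h_def by (auto intro: root_div)
    qed
    then have "finite (h ` Qb)" using roots_finite[OF hf d1] finite_subset by blast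
    then have "h constant_on Qb" using continuous_finite_range_constant[OF _ ch] unfolding Qb_def by auto
    then have "h q' = h q" using w qQ unfolding constant_on_def by metis
    then show "X i w = snd w * \<rho> i (fst w)" using w Qb0[OF w(3)] q0 unfolding h_def \<rho>_def by (simp add: field_simps)
  qed
  have rB: "(t, q) \<in> U" if "t \<in> B" for t using NU qQ that unfolding N_def by auto
  have holo: "\<forall>i<d. \<rho> i holomorphic_on B"
  proof (intro allI impI)
    fix i assume i: "i < d"
    show "\<rho> i holomorphic_on B" unfolding holomorphic_on_def
    proof
      fix t assume t: "t \<in> B"
      have "(\<lambda>s. X i (s, q)) field_differentiable at t"
        using sh i rB[OF t] unfolding sep_holo_on_def by force
      then obtain D where "((\<lambda>s. X i (s, q)) has_field_derivative D) (at t)"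
        unfolding field_differentiable_def by blast
      then have "(\<rho> i has_field_derivative D / q) (at t)"
        unfolding \<rho>_def using DERIV_cdivide by blast
      then have "\<rho> i field_differentiable at t" unfolding field_differentiable_def by blast
      then show "\<rho> i field_differentiable at t within B" by (rule field_differentiable_at_within)
    qed
  qed
  have ne: "\<forall>t\<in>B. \<forall>i<d. \<forall>j<d. i \<noteq> j \<longrightarrow> \<rho> i t \<noteq> \<rho> j t"
    using dist rB q0 unfolding \<rho>_def by fastforce
  have rroot: "leg_poly a b d t 1 (\<rho> i t) = 0" if "t \<in> B" "i < d" for t i
    unfolding \<rho>_def using roots rB[OF that(1)] that(2) q0 by (force intro: root_div)
  define \<kappa> where "\<kappa> = kap d \<rho> p"
  have NB: "\<forall>w\<in>N. fst w \<in> B \<and> snd w \<noteq> 0" using Qb0 unfolding N_def by auto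
  have "web_curv d X (p,q) = \<kappa> / q"
    using web_formula[OF opB opN NB holo ne struct] pB qQ unfolding \<kappa>_def N_def by auto
  moreover have "leg_curv_at a b d (p,q2) (\<kappa>/q2)" if q2: "q2 \<noteq> 0" for q2
  proof -
    define U2 where "U2 = B \<times> (- {0::complex})"
    define X2 where "X2 i w = snd w * \<rho> i (fst w)" for i w
    have opU2: "open U2" unfolding U2_def using opB by (intro open_Times) auto
    have NB2: "\<forall>w\<in>U2. fst w \<in> B \<and> snd w \<noteq> 0" unfolding U2_def by auto
    have lb2: "leg_branches a b d U2 X2" unfolding leg_branches_def
    proof (intro conjI ballI allI impI opU2)
      fix i assume i: "i < d"
      have cr: "continuous_on B (\<rho> i)" using holo i holomorphic_on_imp_continuous_on by blast
      have "continuous_on U2 (\<lambda>w. \<rho> i (fst w))"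
        by (rule continuous_on_compose2[OF cr continuous_on_fst]) (auto simp: U2_def)
      then show "continuous_on U2 (X2 i)" unfolding X2_def[abs_def] by (intro continuous_intros)
      show "sep_holo_on U2 (X2 i)" unfolding sep_holo_on_def
      proof
        fix w assume w: "w \<in> U2"
        have "(\<lambda>t. snd w * \<rho> i t) holomorphic_on B" using holo i by (intro holomorphic_intros) auto
        then have "(\<lambda>t. snd w * \<rho> i t) field_differentiable at (fst w)"
          using opB NB2 w holomorphic_on_imp_differentiable_at by blast
        moreover have "(\<lambda>t. t * \<rho> i (fst w)) field_differentiable at (snd w)"
          by (intro derivative_intros)
        ultimately show "(\<lambda>t. X2 i (t, snd w)) field_differentiable at (fst w) \<and>
                         (\<lambda>t. X2 i (fst w, t)) field_differentiable at (snd w)"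
          unfolding X2_def by simp
      qed
    next
      fix w i assume w: "w \<in> U2" and i: "i < d"
      show "leg_poly a b d (fst w) (snd w) (X2 i w) = 0"
        unfolding X2_def using rroot NB2 w i by (auto intro: root_mul)
    next
      fix w i j assume w: "w \<in> U2" and ij: "i < d" "j < d" "i \<noteq> j"
      show "X2 i w \<noteq> X2 j w" unfolding X2_def using ne NB2 w ij by auto
    qed
    have "(p,q2) \<in> U2" unfolding U2_def using pB q2 by auto
    moreover have "web_curv d X2 (p,q2) = \<kappa> / q2"
      using web_formula[OF opB opU2 NB2 holo ne _ \<open>(p,q2) \<in> U2\<close>] unfolding \<kappa>_def X2_def by auto
    ultimately show ?thesis unfolding leg_curv_at_def using lb2 by metis
  qed
  ultimately show ?thesis by blast
qed

theorem mainTheorem4: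
  fixes a b :: "nat \<Rightarrow> complex" and d :: nat
  assumes "homogeneous_foliation a b d"
    and "leg_curv_holo_off_dualO a b d"
  shows "\<forall>z k. leg_curv_at a b d z k \<longrightarrow> k = 0"
proof (intro allI impI)
  fix z k assume "leg_curv_at a b d z k"
  then obtain U X where zU: "z \<in> U" and lb: "leg_branches a b d U X" and kd: "k = web_curv d X z"
    unfolding leg_curv_at_def by blast
  obtain p q where z: "z = (p,q)" by (cases z)
  show "k = 0"
  proof (cases "d < 3")
    case True
    then have E: "{(i,j,k). i < j \<and> j < k \<and> k < d} = ({} :: (nat\<times>nat\<times>nat) set)" by auto
    show ?thesis unfolding kd web_curv_def E by simp
  next
    case False
    then have d3: "d \<ge> 3" by simp
    show ?thesis
    proof (cases "q = 0")
      case True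
      then have "(p,0) \<in> U" using zU z by simp
      then show ?thesis using case_q0[OF assms(1) d3 lb] by blast
    next
      case False
      obtain \<kappa> where k1: "web_curv d X (p,q) = \<kappa> / q"
        and k2: "\<forall>q2. q2 \<noteq> 0 \<longrightarrow> leg_curv_at a b d (p,q2) (\<kappa>/q2)"
        using case_qne[OF assms(1) _ lb _ False] d3 zU z by auto
      obtain g where gc: "continuous_on UNIV g"
        and gk: "\<forall>u v k. v \<noteq> 0 \<longrightarrow> leg_curv_at a b d (- u / v, - 1 / v) k \<longrightarrow> g (u, v) = - k / v ^ 3"
        using assms(2) unfolding leg_curv_holo_off_dualO_def by blast
      have ev: "v^2 * g (- p * v, v) = \<kappa>" if v: "v \<noteq> 0" for v
      proof -
        have "(- (- p * v) / v, - 1 / v) = (p, - 1 / v)" using v by simp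
        moreover have "leg_curv_at a b d (p, - 1 / v) (\<kappa> / (- 1 / v))" using k2[rule_format, of "- 1 / v"] v by simp
        ultimately have "g (- p * v, v) = - (\<kappa> / (- 1 / v)) / v ^ 3" using gk v by metis
        then show ?thesis using v by (simp add: field_simps power2_eq_square power3_eq_cube)
      qed
      have "isCont g (0,0)" using gc continuous_on_eq_continuous_at by blast
      moreover have "((\<lambda>v::complex. (- p * v, v)) \<longlongrightarrow> (0,0)) (at 0)"
      proof -
        have "((\<lambda>v::complex. (- p * v, v)) \<longlongrightarrow> (- p * 0, 0)) (at 0)"
          by (intro tendsto_intros)
        then show ?thesis by simp
      qed
      ultimately have "((\<lambda>v. g (- p * v, v)) \<longlongrightarrow> g (0,0)) (at 0)" by (rule isCont_tendsto_compose)
      then have "((\<lambda>v::complex. v^2 * g (- p * v, v)) \<longlongrightarrow> 0^2 * g (0,0)) (at 0)"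
        by (intro tendsto_intros)
      then have "((\<lambda>v::complex. v^2 * g (- p * v, v)) \<longlongrightarrow> 0) (at 0)" by simp
      moreover have "eventually (\<lambda>v. v^2 * g (- p * v, v) = \<kappa>) (at (0::complex))"
        using ev eventually_at_filter by (auto simp: eventually_at_topological)
      ultimately have "((\<lambda>v::complex. \<kappa>) \<longlongrightarrow> 0) (at 0)" by (rule Lim_transform_eventually)
      then have "\<kappa> = 0" by (simp add: tendsto_const_iff)
      then show ?thesis using kd k1 z by simp
    qed
  qed
qed

end
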